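(* Let $\mathcal D=U(-1,1)$ and, for $m\ge 1$, let $\mathcal D_m$ denote the distribution of the sum of $m$ i.i.d. samples from $\mathcal D$. Let $k\ge 2$ and let $Z_2,\dots,Z_k$ be independent random variables with $Z_i\sim\mathcal D_{m(i)}$ for positive integers $m(i)$, and let $X\sim\mathcal D$ be independent of them. Then $$\mathbb P\big(0\ge \max(Z_2,\dots,Z_k)\big)\le \mathbb P\big(X\ge\max(Z_2,\dots,Z_k)\big).$$ *)

theory Defs
  imports "HOL-Probability.Probability" "HOL-Probability.Convolution"
begin

definition unifD :: "real measure" where
  "unifD = uniform_measure lborel {-1<..<1}"

primrec unifDsum :: "nat \<Rightarrow> real measure" where
  "unifDsum 0 = return borel 0"
| "unifDsum (Suc n) = convolution (unifDsum n) unifD"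

end

theory Submission imports Defs begin

lemma unifD_prob: "prob_space unifD"
  unfolding unifD_def by (rule prob_space_uniform_measure) auto

lemma sets_unifD[simp, measurable_cong]: "sets unifD = sets borel"
  unfolding unifD_def by simp

lemma sets_unifDsum[simp, measurable_cong]: "sets (unifDsum n) = sets borel"
  by (cases n) auto

lemma space_unifDsum[simp]: "space (unifDsum n) = UNIV"
  by (cases n) auto

lemma space_unifD[simp]: "space unifD = UNIV"
  unfolding unifD_def by simp

lemma unifDsum_prob: "prob_space (unifDsum n)"
proof (induction n)
  case 0 show ?case by (simp add: prob_space_return)
next
  case (Suc n)
  interpret A: prob_space "unifDsum n" by fact
  interpret U: prob_space unifD by (rule unifD_prob)
  interpret P: pair_prob_space "unifDsum n" unifD ..
  show ?case unfolding unifDsum.simps convolution_def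
    by (rule P.prob_space_distr) measurable
qed

lemma um[measurable]: "(uminus::real\<Rightarrow>real) \<in> borel_measurable borel"
  by (rule borel_measurable_continuous_onI) (intro continuous_intros)

lemma ums: "S \<in> sets borel \<Longrightarrow> uminus -` (S::real set) \<in> sets borel"
  using measurable_sets[OF um, of S] by simp

lemma unifD_sym: "distr unifD borel uminus = unifD"
proof (rule measure_eqI)
  fix S assume S: "S \<in> sets (distr unifD borel uminus)"
  hence Sb[measurable]: "S \<in> sets borel" by simp
  have e: "uminus -` S \<inter> {-1<..<1::real} = uminus -` (S \<inter> {-1<..<1})" by auto
  have "emeasure (distr unifD borel uminus) S = emeasure unifD (uminus -` S)"
    by (subst emeasure_distr) (auto intro: ums)
  also have "\<dots> = emeasure lborel (uminus -` S \<inter> {-1<..<1}) / emeasure lborel {-1<..<1::real}"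
    unfolding unifD_def by (subst emeasure_uniform_measure) (auto simp: Int_commute intro: ums Sb)
  also have "emeasure lborel (uminus -` S \<inter> {-1<..<1}) = emeasure (distr lborel borel uminus) (S \<inter> {-1<..<1::real})"
    unfolding e by (subst emeasure_distr) auto
  also have "\<dots> = emeasure lborel (S \<inter> {-1<..<1::real})" by (simp add: lborel_distr_uminus)
  also have "emeasure lborel (S \<inter> {-1<..<1}) / emeasure lborel {-1<..<1::real} = emeasure unifD S"
    unfolding unifD_def by (subst emeasure_uniform_measure) (auto simp: Int_commute)
  finally show "emeasure (distr unifD borel uminus) S = emeasure unifD S" .
qed simp

lemma nn_sym:
  fixes N :: "real measure"
  assumes "distr N borel uminus = N" "sets N = sets borel" and [measurable]: "f \<in> borel_measurable borel"
  shows "(\<integral>\<^sup>+x. f (- x) \<partial>N) = (\<integral>\<^sup>+x. f x \<partial>N)"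
proof -
  have "(\<integral>\<^sup>+x. f x \<partial>N) = (\<integral>\<^sup>+x. f x \<partial>distr N borel uminus)" using assms(1) by simp
  also have "\<dots> = (\<integral>\<^sup>+x. f (- x) \<partial>N)"
    by (subst nn_integral_distr) (auto simp: measurable_cong_sets[OF assms(2) refl] um)
  finally show ?thesis by simp
qed

lemma unifDsum_sym: "distr (unifDsum n) borel uminus = unifDsum n"
proof (induction n)
  case 0 show ?case by (simp add: distr_return)
next
  case (Suc n)
  interpret A: prob_space "unifDsum n" by (rule unifDsum_prob)
  interpret U: prob_space unifD by (rule unifD_prob)
  show ?case
  proof (rule measure_eqI)
    fix S assume S: "S \<in> sets (distr (unifDsum (Suc n)) borel uminus)"
    hence Sb[measurable]: "S \<in> sets borel" by simp
    have m: "uminus -` S \<in> sets borel" by (rule ums) fact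
    have "emeasure (distr (unifDsum (Suc n)) borel uminus) S = emeasure (unifDsum (Suc n)) (uminus -` S)"
      by (subst emeasure_distr) auto
    also have "\<dots> = \<integral>\<^sup>+x. \<integral>\<^sup>+y. indicator S (- x + - y) \<partial>unifD \<partial>unifDsum n"
      unfolding unifDsum.simps
      by (subst convolution_emeasure'[OF m]) (auto intro!: nn_integral_cong A.finite_measure U.finite_measure simp: indicator_def)
    also have "\<dots> = \<integral>\<^sup>+x. \<integral>\<^sup>+y. indicator S (- x + y) \<partial>unifD \<partial>unifDsum n"
      by (intro nn_integral_cong nn_sym[where f="\<lambda>y. indicator S (- _ + y)"] unifD_sym) auto
    also have "\<dots> = \<integral>\<^sup>+x. \<integral>\<^sup>+y. indicator S (x + y) \<partial>unifD \<partial>unifDsum n"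
      by (rule nn_sym[where f="\<lambda>x. \<integral>\<^sup>+y. indicator S (x + y) \<partial>unifD", OF Suc]) auto
    also have "\<dots> = emeasure (unifDsum (Suc n)) S"
      unfolding unifDsum.simps
      by (subst convolution_emeasure'[OF Sb]) (auto intro!: A.finite_measure U.finite_measure)
    finally show "emeasure (distr (unifDsum (Suc n)) borel uminus) S = emeasure (unifDsum (Suc n)) S" .
  qed simp
qed

lemma unifDsum_noatom: "emeasure (unifDsum (Suc n)) {0} = 0"
proof -
  interpret A: prob_space "unifDsum n" by (rule unifDsum_prob)
  interpret U: prob_space unifD by (rule unifD_prob)
  have "emeasure (unifDsum (Suc n)) {0} = \<integral>\<^sup>+x. emeasure unifD {a. a + x \<in> {0}} \<partial>unifDsum n"
    unfolding unifDsum.simps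
    by (rule convolution_emeasure) (auto intro!: A.finite_measure U.finite_measure)
  also have "\<dots> = \<integral>\<^sup>+x. 0 \<partial>unifDsum n"
  proof (rule nn_integral_cong)
    fix x :: real
    have "{a. a + x \<in> {0}} = {-x}" by (auto simp: eq_neg_iff_add_eq_0)
    moreover have "emeasure lborel ({-1<..<1} \<inter> {-x}) \<le> emeasure lborel {-x::real}"
      by (rule emeasure_mono) auto
    ultimately show "emeasure unifD {a. a + x \<in> {0}} = 0"
      unfolding unifD_def by (subst emeasure_uniform_measure) auto
  qed
  finally show ?thesis by simp
qed

lemma alg:
  fixes a :: "nat \<Rightarrow> real"
  assumes "finite J" "\<forall>i\<in>J. 1/2 \<le> a i \<and> a i \<le> 1"
  shows "(\<Prod>i\<in>J. a i) + (\<Prod>i\<in>J. 1 - a i) \<ge> 2 * (1/2) ^ card J"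
  using assms
proof (induction J rule: finite_induct)
  case empty then show ?case by simp
next
  case (insert x F)
  let ?P = "\<Prod>i\<in>F. a i" and ?Q = "\<Prod>i\<in>F. 1 - a i"
  have Q0: "0 \<le> ?Q" using insert by (intro prod_nonneg) auto
  have QP: "?Q \<le> ?P" using insert by (intro prod_mono) auto
  have IH: "2 * (1/2) ^ card F \<le> ?P + ?Q" using insert by auto
  have ax: "1/2 \<le> a x" "a x \<le> 1" using insert by auto
  have "0 \<le> (a x - 1/2) * (?P - ?Q)" using ax QP by simp
  moreover have "a x * ?P + (1 - a x) * ?Q = (?P + ?Q)/2 + (a x - 1/2) * (?P - ?Q)" by (simp add: field_simps)
  ultimately have "a x * ?P + (1 - a x) * ?Q \<ge> (?P + ?Q) / 2" by linarith
  moreover have eq: "(\<Prod>i\<in>insert x F. a i) + (\<Prod>i\<in>insert x F. 1 - a i) = a x * ?P + (1 - a x) * ?Q"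
    using insert by simp
  moreover have c: "2*(1/2::real)^card (insert x F) = (2*(1/2)^card F)/2" using insert by simp
  ultimately show ?case using IH
    by (metis (no_types, lifting) add_divide_distrib divide_right_mono order_trans zero_le_numeral)
qed

lemma Fm: "(\<lambda>y. measure (unifDsum n) {..y}) \<in> borel_measurable borel"
proof (rule borel_measurable_mono)
  interpret prob_space "unifDsum n" by (rule unifDsum_prob)
  show "mono (\<lambda>y. measure (unifDsum n) {..y})"
    by (auto simp: mono_def intro!: finite_measure_mono)
qed

lemma msym: "A \<in> sets borel \<Longrightarrow> measure (unifDsum n) (uminus -` A) = measure (unifDsum n) A"
proof -
  assume A: "A \<in> sets borel"
  have "uminus \<in> measurable (unifDsum n) borel"
    by (simp add: measurable_cong_sets[OF sets_unifDsum refl] um)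
  then have "measure (distr (unifDsum n) borel uminus) A = measure (unifDsum n) (uminus -` A \<inter> space (unifDsum n))"
    using A by (rule measure_distr)
  then show ?thesis using unifDsum_sym[of n] by simp
qed

lemma Fsum: "measure (unifDsum n) {..y} + measure (unifDsum n) {..-y} \<ge> 1"
proof -
  interpret prob_space "unifDsum n" by (rule unifDsum_prob)
  have "uminus -` {..-y} = {y..}" by auto
  then have "measure (unifDsum n) {..-y} = measure (unifDsum n) {y..}" using msym[where n=n and A="{..-y}"] by simp
  moreover have "1 \<le> measure (unifDsum n) {..y} + measure (unifDsum n) {y..}"
  proof -
    have u: "{..y} \<union> {y..} = (UNIV::real set)" by auto
    have "1 = measure (unifDsum n) ({..y} \<union> {y..})" using prob_space unfolding u by simp
    also have "\<dots> \<le> measure (unifDsum n) {..y} + measure (unifDsum n) {y..}"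
      by (rule measure_Un_le) auto
    finally show ?thesis .
  qed
  ultimately show ?thesis by simp
qed

lemma F_zero: "measure (unifDsum (Suc n)) {..0} = 1/2"
proof -
  interpret prob_space "unifDsum (Suc n)" by (rule unifDsum_prob)
  have "uminus -` {..<0::real} = {0<..}" by auto
  then have e: "measure (unifDsum (Suc n)) {..<0} = measure (unifDsum (Suc n)) {0<..}" using msym[where n="Suc n" and A="{..<0}"] by simp
  have z: "measure (unifDsum (Suc n)) {0} = 0" using unifDsum_noatom[of n] by (simp add: measure_def)
  have u: "{..0} \<union> {0<..} = (UNIV::real set)" by auto
  have "1 = measure (unifDsum (Suc n)) ({..0} \<union> {0<..})" using prob_space unfolding u by simp
  also have "\<dots> = measure (unifDsum (Suc n)) {..0} + measure (unifDsum (Suc n)) {0<..}"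
    by (rule finite_measure_Union) auto
  finally have 1: "1 = measure (unifDsum (Suc n)) {..0} + measure (unifDsum (Suc n)) {0<..}" .
  have u2: "{..0} = {..<0} \<union> {0::real}" by auto
  have "measure (unifDsum (Suc n)) {..0} = measure (unifDsum (Suc n)) {..<0} + measure (unifDsum (Suc n)) {0}"
    unfolding u2 by (rule finite_measure_Union) auto
  then show ?thesis using 1 e z by simp
qed


theorem lemma26:
  fixes M :: "'a measure" and X :: "'a \<Rightarrow> real" and Z :: "nat \<Rightarrow> 'a \<Rightarrow> real"
    and m :: "nat \<Rightarrow> nat" and k :: nat
  assumes "prob_space M"
    and "k \<ge> 2"
    and "\<forall>i\<in>{2..k}. m i > 0"
    and "prob_space.indep_vars M (\<lambda>_. borel) (\<lambda>i. if i = 0 then X else Z i) (insert 0 {2..k})"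
    and "distr M borel X = unifD"
    and "\<forall>i\<in>{2..k}. distr M borel (Z i) = unifDsum (m i)"
  shows "measure M {\<omega> \<in> space M. 0 \<ge> Max ((\<lambda>i. Z i \<omega>) ` {2..k})}
         \<le> measure M {\<omega> \<in> space M. X \<omega> \<ge> Max ((\<lambda>i. Z i \<omega>) ` {2..k})}"
proof -
  interpret M: prob_space M by fact
  define J where "J = {2..k}"
  define I where "I = insert 0 J"
  define Y where "Y = (\<lambda>i. if i = 0 then X else Z i)"
  define N where "N = (\<lambda>i. if i = 0 then unifD else unifDsum (m i))"
  have fJ: "finite J" "J \<noteq> {}" "0 \<notin> J" using assms(2) by (auto simp: J_def)
  have fI: "finite I" "I \<noteq> {}" "J \<subseteq> I" "0 \<in> I" by (auto simp: I_def fJ)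
  have ind: "M.indep_vars (\<lambda>_. borel) Y I" using assms(4) by (simp add: Y_def I_def J_def)
  have rv: "\<And>i. i \<in> I \<Longrightarrow> Y i \<in> measurable M borel" using ind unfolding M.indep_vars_def by auto
  have dN: "\<And>i. i \<in> I \<Longrightarrow> distr M borel (Y i) = N i" using assms(5,6) by (auto simp: Y_def N_def I_def J_def)
  have Nprob: "\<And>i. prob_space (N i)" by (simp add: N_def unifD_prob unifDsum_prob)
  have sN: "\<And>i. sets (N i) = sets borel" by (simp add: N_def)
  have spN: "\<And>i. space (N i) = UNIV" by (simp add: N_def)
  interpret PS: product_sigma_finite N
    unfolding product_sigma_finite_def using Nprob by (auto intro: prob_space_imp_sigma_finite)
  define h where "h = (\<lambda>\<omega>. \<lambda>i\<in>I. Y i \<omega>)"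
  have joint: "distr M (PiM I (\<lambda>_. borel)) h = PiM I N"
  proof -
    have "distr M (PiM I (\<lambda>_. borel)) h = PiM I (\<lambda>i. distr M borel (Y i))"
      using M.indep_vars_iff_distr_eq_PiM'[OF fI(2) rv] ind unfolding h_def by simp
    also have "\<dots> = PiM I N" by (rule PiM_cong) (auto simp: dN)
    finally show ?thesis .
  qed
  have hm: "h \<in> measurable M (PiM I (\<lambda>_. borel))" unfolding h_def
    by (rule measurable_restrict) (use rv in auto)
  have spP: "space (PiM I N) = PiE I (\<lambda>_. UNIV)" by (simp add: space_PiM spN)
  have spP': "space (PiM I (\<lambda>_. borel)) = PiE I (\<lambda>_. UNIV)" by (simp add: space_PiM)
  have setsP: "sets (PiM I N) = sets (PiM I (\<lambda>_. borel))" by (rule sets_PiM_cong) (auto simp: sN)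
  have key: "\<And>S. S \<in> sets (PiM I (\<lambda>_. borel)) \<Longrightarrow> emeasure M (h -` S \<inter> space M) = emeasure (PiM I N) S"
    by (subst emeasure_distr[OF hm, symmetric]) (simp_all add: joint)
  define F where "F = (\<lambda>i y. measure (unifDsum (m i)) {..y})"
  have eN: "\<And>i y. i \<in> J \<Longrightarrow> emeasure (N i) {..y} = ennreal (F i y)"
  proof -
    fix i y assume "i \<in> J"
    then have e: "N i = unifDsum (m i)" using fJ by (auto simp: N_def)
    interpret prob_space "unifDsum (m i)" by (rule unifDsum_prob)
    from e show "emeasure (N i) {..y} = ennreal (F i y)" by (simp add: F_def emeasure_eq_measure)
  qed
  have F0: "\<And>i. i \<in> J \<Longrightarrow> 0 \<le> F i y" for y by (simp add: F_def)
  define G where "G = (\<lambda>y. \<Prod>i\<in>J. F i y)"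
  have EG: "\<And>y. (\<Prod>i\<in>J. emeasure (N i) {..y}) = ennreal (G y)"
    by (simp add: eN G_def prod_ennreal F0)
  have Mx: "\<And>\<omega> c. Max ((\<lambda>i. Z i \<omega>) ` J) \<le> c \<longleftrightarrow> (\<forall>i\<in>J. Z i \<omega> \<le> c)"
    using fJ by (simp add: Max_le_iff)
  define S1 where "S1 = prod_emb I N J (PiE J (\<lambda>_. {..0::real}))"
  have S1s: "S1 \<in> sets (PiM I (\<lambda>_. borel))" unfolding S1_def setsP[symmetric]
    by (rule sets_PiM_I) (auto simp: fJ fI sN)
  have A1: "{\<omega> \<in> space M. 0 \<ge> Max ((\<lambda>i. Z i \<omega>) ` {2..k})} = h -` S1 \<inter> space M"
  proof -
    have r: "restrict (h \<omega>) J = (\<lambda>i\<in>J. Z i \<omega>)" for \<omega> using fJ fI by (auto simp: h_def Y_def restrict_def fun_eq_iff)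
    have "h \<omega> \<in> S1 \<longleftrightarrow> (\<forall>i\<in>J. Z i \<omega> \<le> 0)" for \<omega>
      unfolding S1_def prod_emb_iff r by (auto simp: spN h_def PiE_iff)
    then show ?thesis using Mx by (auto simp: J_def[symmetric])
  qed
  have E1: "emeasure M {\<omega> \<in> space M. 0 \<ge> Max ((\<lambda>i. Z i \<omega>) ` {2..k})} = ennreal (G 0)"
  proof -
    have "emeasure (PiM I N) S1 = (\<Prod>i\<in>J. emeasure (N i) {..0})"
      unfolding S1_def by (rule emeasure_PiM_emb) (auto simp: Nprob fJ fI sN)
    then show ?thesis unfolding A1 key[OF S1s] EG .
  qed
  define S2 where "S2 = {f \<in> space (PiM I (\<lambda>_. borel::real measure)). \<forall>i\<in>J. f i \<le> f (0::nat)}"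
  have S2s: "S2 \<in> sets (PiM I (\<lambda>_. borel))"
  proof -
    have "Measurable.pred (PiM I (\<lambda>_. borel::real measure)) (\<lambda>f. \<forall>i\<in>J. f i \<le> f (0::nat))"
    proof (rule pred_intros_finite(3)[OF fJ(1)])
      fix i assume "i \<in> J" then have "i \<in> I" using fI by auto
      have mm: "(\<lambda>f. f i) \<in> borel_measurable (PiM I (\<lambda>_. borel::real measure))"
        "(\<lambda>f. f 0) \<in> borel_measurable (PiM I (\<lambda>_. borel::real measure))"
        using \<open>i\<in>I\<close> fI by (auto intro!: measurable_component_singleton)
      show "Measurable.pred (PiM I (\<lambda>_. borel::real measure)) (\<lambda>f. f i \<le> f (0::nat))"
        unfolding pred_def by (rule borel_measurable_le[OF mm])
    qed
    then show ?thesis by (simp add: S2_def pred_def)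
  qed
  have A2: "{\<omega> \<in> space M. X \<omega> \<ge> Max ((\<lambda>i. Z i \<omega>) ` {2..k})} = h -` S2 \<inter> space M"
  proof -
    have "h \<omega> \<in> S2 \<longleftrightarrow> (\<forall>i\<in>J. Z i \<omega> \<le> X \<omega>)" if "\<omega> \<in> space M" for \<omega>
      using measurable_space[OF hm that] fI fJ by (auto simp: S2_def h_def Y_def)
    then show ?thesis using Mx by (auto simp: J_def[symmetric])
  qed
  have Gm: "G \<in> borel_measurable borel" unfolding G_def F_def
    by (rule borel_measurable_prod) (rule Fm)
  have E2: "emeasure (PiM I N) S2 = \<integral>\<^sup>+ y. ennreal (G y) \<partial>unifD"
  proof -
    have S2s': "S2 \<in> sets (PiM (insert 0 J) N)" using S2s setsP by (simp add: I_def)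
    have "emeasure (PiM I N) S2 = \<integral>\<^sup>+ f. indicator S2 f \<partial>PiM (insert 0 J) N"
      using S2s' by (simp add: I_def)
    also have "\<dots> = \<integral>\<^sup>+ y. \<integral>\<^sup>+ x. indicator S2 (x(0:=y)) \<partial>PiM J N \<partial>N 0"
      by (rule PS.product_nn_integral_insert_rev) (use fJ S2s' in auto)
    also have "\<dots> = \<integral>\<^sup>+ y. ennreal (G y) \<partial>N 0"
    proof (rule nn_integral_cong)
      fix y
      have "(\<integral>\<^sup>+ x. indicator S2 (x(0:=y)) \<partial>PiM J N) = (\<integral>\<^sup>+ x. indicator (PiE J (\<lambda>_. {..y})) x \<partial>PiM J N)"
      proof (rule nn_integral_cong)
        fix x assume "x \<in> space (PiM J N)"
        then have x: "x \<in> PiE J (\<lambda>_. UNIV)" by (simp add: space_PiM spN)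
        have "x(0:=y) \<in> S2 \<longleftrightarrow> x \<in> PiE J (\<lambda>_. {..y})"
          using x fJ by (auto simp: S2_def spP' I_def PiE_iff extensional_def space_PiM)
        then show "indicator S2 (x(0:=y)) = (indicator (PiE J (\<lambda>_. {..y})) x :: ennreal)"
          by (simp add: indicator_def)
      qed
      also have "\<dots> = emeasure (PiM J N) (PiE J (\<lambda>_. {..y}))"
        by (rule nn_integral_indicator) (auto intro!: sets_PiM_I_finite simp: fJ sN)
      also have "\<dots> = (\<Prod>i\<in>J. emeasure (N i) {..y})"
        by (rule PS.emeasure_PiM) (auto simp: fJ sN)
      finally show "(\<integral>\<^sup>+ x. indicator S2 (x(0:=y)) \<partial>PiM J N) = ennreal (G y)" by (simp add: EG)
    qed
    finally show ?thesis by (simp add: N_def)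
  qed
  have Fhalf: "\<And>i. i \<in> J \<Longrightarrow> F i 0 = 1/2"
  proof -
    fix i assume "i \<in> J"
    then have "m i > 0" using assms(3) by (simp add: J_def)
    then obtain n where "m i = Suc n" using gr0_conv_Suc by blast
    then show "F i 0 = 1/2" unfolding F_def using F_zero[of n] by simp
  qed
  have G0: "G 0 = (1/2)^card J" by (simp add: G_def Fhalf)
  have Gnn: "\<And>y. 0 \<le> G y" by (simp add: G_def F0 prod_nonneg)
  have Gsym: "G y + G (-y) \<ge> 2 * G 0" for y
  proof -
    define t where "t = \<bar>y\<bar>"
    have t: "G y + G (-y) = G t + G (-t)" by (cases "y \<ge> 0") (auto simp: t_def)
    have ai: "1/2 \<le> F i t \<and> F i t \<le> 1" if "i \<in> J" for i
    proof -
      interpret prob_space "unifDsum (m i)" by (rule unifDsum_prob)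
      have "F i 0 \<le> F i t" unfolding F_def by (rule finite_measure_mono) (auto simp: t_def)
      then show ?thesis using Fhalf[OF that] by (simp add: F_def)
    qed
    have "(\<Prod>i\<in>J. 1 - F i t) \<le> (\<Prod>i\<in>J. F i (-t))"
      by (rule prod_mono) (use ai Fsum in \<open>auto simp: F_def algebra_simps\<close>)
    moreover have "(\<Prod>i\<in>J. F i t) + (\<Prod>i\<in>J. 1 - F i t) \<ge> 2 * (1/2)^card J"
      by (rule alg) (use fJ ai in auto)
    ultimately show ?thesis unfolding t G0 by (simp add: G_def)
  qed
  have Gm': "(\<lambda>y. ennreal (G (- y) / 2)) \<in> borel_measurable borel" using Gm um by measurable
  have "(\<integral>\<^sup>+ y. ennreal (G y) \<partial>unifD) = (\<integral>\<^sup>+ y. ennreal (G y / 2) + ennreal (G y / 2) \<partial>unifD)"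
    by (rule nn_integral_cong) (simp add: ennreal_plus[symmetric] Gnn del: ennreal_plus)
  also have "\<dots> = (\<integral>\<^sup>+ y. ennreal (G y / 2) \<partial>unifD) + (\<integral>\<^sup>+ y. ennreal (G y / 2) \<partial>unifD)"
    by (rule nn_integral_add) (use Gm in auto)
  also have "\<dots> = (\<integral>\<^sup>+ y. ennreal (G y / 2) \<partial>unifD) + (\<integral>\<^sup>+ y. ennreal (G (- y) / 2) \<partial>unifD)"
    using nn_sym[symmetric, OF unifD_sym sets_unifD, of "\<lambda>y. ennreal (G y / 2)"] Gm by simp
  also have "\<dots> = (\<integral>\<^sup>+ y. ennreal (G y / 2) + ennreal (G (- y) / 2) \<partial>unifD)"
    by (rule nn_integral_add[symmetric]) (use Gm Gm' in auto)
  also have "\<dots> \<ge> (\<integral>\<^sup>+ y. ennreal (G 0) \<partial>unifD)"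
  proof (rule nn_integral_mono)
    fix y
    have "G 0 \<le> G y / 2 + G (- y) / 2" using Gsym[of y] by simp
    then show "ennreal (G 0) \<le> ennreal (G y / 2) + ennreal (G (- y) / 2)"
      by (simp add: ennreal_plus[symmetric] Gnn del: ennreal_plus)
  qed
  also have "(\<integral>\<^sup>+ y. ennreal (G 0) \<partial>unifD) = ennreal (G 0)"
    using prob_space.emeasure_space_1[OF unifD_prob] by simp
  finally have I2: "ennreal (G 0) \<le> (\<integral>\<^sup>+ y. ennreal (G y) \<partial>unifD)" .
  have "ennreal (G 0) \<le> emeasure M {\<omega> \<in> space M. X \<omega> \<ge> Max ((\<lambda>i. Z i \<omega>) ` {2..k})}"
    unfolding A2 key[OF S2s] E2 by (rule I2)
  then have 2: "G 0 \<le> measure M {\<omega> \<in> space M. X \<omega> \<ge> Max ((\<lambda>i. Z i \<omega>) ` {2..k})}"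
    by (simp add: M.emeasure_eq_measure ennreal_le_iff)
  have 1: "measure M {\<omega> \<in> space M. 0 \<ge> Max ((\<lambda>i. Z i \<omega>) ` {2..k})} = G 0"
    using E1 Gnn by (simp add: measure_def)
  show ?thesis using 1 2 by simp
qed

end
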